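(* Weak sd-stability does not imply claimwise stability: there exist a set $N$ of $n$ agents and a set $O$ of $n$ objects with strict preferences $\succ_i$ over $O$ and strict priorities $\succ_o$ over $N$, and a random matching $p$ that is weakly sd-stable but not claimwise stable.
   Context: A random matching is an $n\times n$ bistochastic matrix $p=[p(i,o)]$; it is deterministic if entries are in $\{0,1\}$. $p$ is claimwise stable if for each $(i,o)\in N\times O$ and each $j\in N$ with $i\succ_o j$, $\sum_{o':o'\succ_i o}p(i,o')\ge p(j,o)$. For agent $i$ with $o_1\succ_i\dots\succ_i o_n$, $p(i)\succsim_i^{sd}q(i)$ if $\sum_{l=1}^k p(i,o_l)\ge\sum_{l=1}^k q(i,o_l)$ for all $k$, and $p(i)\succ_i^{sd}q(i)$ if additionally $p(i)\neq q(i)$; for object $o$ with $i_1\succ_o\dots\succ_o i_n$, $p(o)\succsim_o^{sd}q(o)$ if $\sum_{l=1}^k p(i_l,o)\ge\sum_{l=1}^k q(i_l,o)$ for all $k$, and $p(o)\succ_o^{sd}q(o)$ if additionally $p(o)\neq q(o)$. $p$ is strongly sd-blocked by $(i,o)$ if there is a deterministic matching $q\ne p$ with $q(i,o)=1$, $q(i)\succ_i^{sd}p(i)$ and $q(o)\succ_o^{sd}p(o)$. $p$ is weakly sd-stable if no pair $(i,o)$ strongly sd-blocks $p$. *)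

theory Defs
  imports Complex_Main
begin

text \<open>Agents N = {0..<n} and objects O = {0..<n}.
  pref i ob ob' means ob \<succ>_i ob' (agent i strictly prefers object ob to ob').
  prio ob i j means i \<succ>_o j (object ob gives i strictly higher priority than j).
  A random matching is p :: nat \<Rightarrow> nat \<Rightarrow> real, p i ob the probability that i gets ob.\<close>

definition strict_total_on :: "nat set \<Rightarrow> (nat \<Rightarrow> nat \<Rightarrow> bool) \<Rightarrow> bool" where
  "strict_total_on A R \<longleftrightarrow>
     (\<forall>x\<in>A. \<not> R x x) \<and>
     (\<forall>x\<in>A. \<forall>y\<in>A. \<forall>z\<in>A. R x y \<longrightarrow> R y z \<longrightarrow> R x z) \<and>
     (\<forall>x\<in>A. \<forall>y\<in>A. x \<noteq> y \<longrightarrow> R x y \<or> R y x)"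

definition strict_prefs :: "nat \<Rightarrow> (nat \<Rightarrow> nat \<Rightarrow> nat \<Rightarrow> bool) \<Rightarrow> bool" where
  "strict_prefs n pref \<longleftrightarrow> (\<forall>i<n. strict_total_on {0..<n} (pref i))"

definition strict_prios :: "nat \<Rightarrow> (nat \<Rightarrow> nat \<Rightarrow> nat \<Rightarrow> bool) \<Rightarrow> bool" where
  "strict_prios n prio \<longleftrightarrow> (\<forall>ob<n. strict_total_on {0..<n} (prio ob))"

definition bistochastic :: "nat \<Rightarrow> (nat \<Rightarrow> nat \<Rightarrow> real) \<Rightarrow> bool" where
  "bistochastic n p \<longleftrightarrow>
     (\<forall>i<n. \<forall>ob<n. p i ob \<ge> 0) \<and>
     (\<forall>i<n. (\<Sum>ob<n. p i ob) = 1) \<and>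
     (\<forall>ob<n. (\<Sum>i<n. p i ob) = 1)"

definition deterministic :: "nat \<Rightarrow> (nat \<Rightarrow> nat \<Rightarrow> real) \<Rightarrow> bool" where
  "deterministic n q \<longleftrightarrow> bistochastic n q \<and> (\<forall>i<n. \<forall>ob<n. q i ob = 0 \<or> q i ob = 1)"

definition claimwise_stable ::
  "nat \<Rightarrow> (nat \<Rightarrow> nat \<Rightarrow> nat \<Rightarrow> bool) \<Rightarrow> (nat \<Rightarrow> nat \<Rightarrow> nat \<Rightarrow> bool) \<Rightarrow> (nat \<Rightarrow> nat \<Rightarrow> real) \<Rightarrow> bool" where
  "claimwise_stable n pref prio p \<longleftrightarrow>
     (\<forall>i<n. \<forall>ob<n. \<forall>j<n. prio ob i j \<longrightarrow>
        (\<Sum>ob'\<in>{ob'. ob' < n \<and> pref i ob' ob}. p i ob') \<ge> p j ob)"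

text \<open>First-order stochastic dominance. Summing over the top-k objects for all k is the same
  as summing over every upper contour set {ob'. ob' = ob or ob' \<succ> ob}.\<close>

definition sd_agent_weak ::
  "nat \<Rightarrow> (nat \<Rightarrow> nat \<Rightarrow> nat \<Rightarrow> bool) \<Rightarrow> nat \<Rightarrow> (nat \<Rightarrow> nat \<Rightarrow> real) \<Rightarrow> (nat \<Rightarrow> nat \<Rightarrow> real) \<Rightarrow> bool" where
  "sd_agent_weak n pref i p q \<longleftrightarrow>
     (\<forall>ob<n. (\<Sum>ob'\<in>{ob'. ob' < n \<and> (ob' = ob \<or> pref i ob' ob)}. p i ob')
           \<ge> (\<Sum>ob'\<in>{ob'. ob' < n \<and> (ob' = ob \<or> pref i ob' ob)}. q i ob'))"

definition sd_agent_strict ::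
  "nat \<Rightarrow> (nat \<Rightarrow> nat \<Rightarrow> nat \<Rightarrow> bool) \<Rightarrow> nat \<Rightarrow> (nat \<Rightarrow> nat \<Rightarrow> real) \<Rightarrow> (nat \<Rightarrow> nat \<Rightarrow> real) \<Rightarrow> bool" where
  "sd_agent_strict n pref i p q \<longleftrightarrow>
     sd_agent_weak n pref i p q \<and> (\<exists>ob<n. p i ob \<noteq> q i ob)"

definition sd_object_weak ::
  "nat \<Rightarrow> (nat \<Rightarrow> nat \<Rightarrow> nat \<Rightarrow> bool) \<Rightarrow> nat \<Rightarrow> (nat \<Rightarrow> nat \<Rightarrow> real) \<Rightarrow> (nat \<Rightarrow> nat \<Rightarrow> real) \<Rightarrow> bool" where
  "sd_object_weak n prio ob p q \<longleftrightarrow>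
     (\<forall>i<n. (\<Sum>j\<in>{j. j < n \<and> (j = i \<or> prio ob j i)}. p j ob)
           \<ge> (\<Sum>j\<in>{j. j < n \<and> (j = i \<or> prio ob j i)}. q j ob))"

definition sd_object_strict ::
  "nat \<Rightarrow> (nat \<Rightarrow> nat \<Rightarrow> nat \<Rightarrow> bool) \<Rightarrow> nat \<Rightarrow> (nat \<Rightarrow> nat \<Rightarrow> real) \<Rightarrow> (nat \<Rightarrow> nat \<Rightarrow> real) \<Rightarrow> bool" where
  "sd_object_strict n prio ob p q \<longleftrightarrow>
     sd_object_weak n prio ob p q \<and> (\<exists>i<n. p i ob \<noteq> q i ob)"

definition strongly_sd_blocks ::
  "nat \<Rightarrow> (nat \<Rightarrow> nat \<Rightarrow> nat \<Rightarrow> bool) \<Rightarrow> (nat \<Rightarrow> nat \<Rightarrow> nat \<Rightarrow> bool) \<Rightarrow> (nat \<Rightarrow> nat \<Rightarrow> real) \<Rightarrow> nat \<Rightarrow> nat \<Rightarrow> bool" where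
  "strongly_sd_blocks n pref prio p i ob \<longleftrightarrow>
     (\<exists>q. deterministic n q \<and> (\<exists>a<n. \<exists>b<n. q a b \<noteq> p a b) \<and> q i ob = 1 \<and>
          sd_agent_strict n pref i q p \<and> sd_object_strict n prio ob q p)"

definition weakly_sd_stable ::
  "nat \<Rightarrow> (nat \<Rightarrow> nat \<Rightarrow> nat \<Rightarrow> bool) \<Rightarrow> (nat \<Rightarrow> nat \<Rightarrow> nat \<Rightarrow> bool) \<Rightarrow> (nat \<Rightarrow> nat \<Rightarrow> real) \<Rightarrow> bool" where
  "weakly_sd_stable n pref prio p \<longleftrightarrow>
     (\<forall>i<n. \<forall>ob<n. \<not> strongly_sd_blocks n pref prio p i ob)"

end

theory Submission imports Defs begin
lemma lt3: "(x::nat) < 3 \<longleftrightarrow> x = 0 \<or> x = 1 \<or> x = 2" by auto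
lemma sum3: "(\<Sum>x<(3::nat). f x) = f 0 + f 1 + (f 2 :: real)"
  by (simp add: numeral_3_eq_3 numeral_2_eq_2 lessThan_Suc)
lemma all3: "(\<forall>x<(3::nat). P x) \<longleftrightarrow> P 0 \<and> P 1 \<and> P 2"
  unfolding lt3 by blast
lemma ball3: "(\<forall>x\<in>{0..<(3::nat)}. P x) \<longleftrightarrow> P 0 \<and> P 1 \<and> P 2"
proof -
  have "(\<forall>x\<in>{0..<(3::nat)}. P x) = (\<forall>x<3. P x)" by auto
  then show ?thesis unfolding all3 .
qed

definition pr :: "nat \<Rightarrow> nat \<Rightarrow> nat \<Rightarrow> bool" where
  "pr i a b \<longleftrightarrow> (a + 3 - i) mod 3 < (b + 3 - i) mod 3"

definition pio :: "nat \<Rightarrow> nat \<Rightarrow> nat \<Rightarrow> bool" where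
  "pio o1 a b \<longleftrightarrow> (o1 + 4 - a) mod 3 < (o1 + 4 - b) mod 3"

definition pp :: "nat \<Rightarrow> nat \<Rightarrow> real" where "pp i ob = 1/3"

lemma sp: "strict_prefs 3 pr"
    unfolding strict_prefs_def strict_total_on_def all3 ball3 pr_def by simp
lemma so: "strict_prios 3 pio"
    unfolding strict_prios_def strict_total_on_def all3 ball3 pio_def by simp
lemma bs: "bistochastic 3 pp"
    unfolding bistochastic_def all3 sum3 pp_def by simp

lemma top_ag: "i < 3 \<Longrightarrow> {ob'. ob' < 3 \<and> (ob' = i \<or> pr i ob' i)} = {i}"
  unfolding pr_def by auto

lemma top_ob: "ob < 3 \<Longrightarrow> {j. j < 3 \<and> (j = (ob+1) mod 3 \<or> pio ob j ((ob+1) mod 3))} = {(ob+1) mod 3}"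
  unfolding pio_def lt3 by auto

lemma ncw: "\<not> claimwise_stable 3 pr pio pp"
proof
  assume "claimwise_stable 3 pr pio pp"
  hence "(\<Sum>ob'\<in>{ob'. ob' < 3 \<and> pr 0 ob' 0}. pp 0 ob') \<ge> pp 2 0"
    unfolding claimwise_stable_def pio_def by auto
  moreover have "{ob'. ob' < 3 \<and> pr 0 ob' 0} = {}" unfolding pr_def by auto
  ultimately show False by (simp add: pp_def)
qed
lemma det3:
  assumes "deterministic 3 q" "q i ob = 1" "i < 3" "ob < 3" "j < 3" "j \<noteq> i"
  shows "q j ob = 0"
proof -
  have nn: "\<And>a b. a<3 \<Longrightarrow> b<3 \<Longrightarrow> q a b \<ge> 0" and c: "(\<Sum>x<3. q x ob) = 1"
    using assms unfolding deterministic_def bistochastic_def by auto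
  have "q 0 ob \<ge> 0" "q 1 ob \<ge> 0" "q 2 ob \<ge> 0" using nn assms by auto
  moreover have "q 0 ob + q 1 ob + q 2 ob = 1" using c unfolding sum3 .
  ultimately show ?thesis using assms(2,3,5,6) unfolding lt3 by auto
qed

lemma det3':
  assumes "deterministic 3 q" "q i ob = 1" "i < 3" "ob < 3" "b < 3" "b \<noteq> ob"
  shows "q i b = 0"
proof -
  have nn: "\<And>a b. a<3 \<Longrightarrow> b<3 \<Longrightarrow> q a b \<ge> 0" and c: "(\<Sum>x<3. q i x) = 1"
    using assms unfolding deterministic_def bistochastic_def by auto
  have "q i 0 \<ge> 0" "q i 1 \<ge> 0" "q i 2 \<ge> 0" using nn assms by auto
  moreover have "q i 0 + q i 1 + q i 2 = 1" using c unfolding sum3 .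
  ultimately show ?thesis using assms(2,4,5,6) unfolding lt3 by auto
qed

lemma wss: "weakly_sd_stable 3 pr pio pp"
  unfolding weakly_sd_stable_def
proof (intro allI impI notI)
  fix i ob assume i: "i < (3::nat)" and ob: "ob < (3::nat)"
    and "strongly_sd_blocks 3 pr pio pp i ob"
  then obtain q where d: "deterministic 3 q" and q1: "q i ob = 1"
    and ag: "sd_agent_weak 3 pr i q pp" and obj: "sd_object_weak 3 pio ob q pp"
    unfolding strongly_sd_blocks_def sd_agent_strict_def sd_object_strict_def by blast
  have "(\<Sum>ob'\<in>{ob'. ob' < 3 \<and> (ob' = i \<or> pr i ob' i)}. q i ob')
           \<ge> (\<Sum>ob'\<in>{ob'. ob' < 3 \<and> (ob' = i \<or> pr i ob' i)}. pp i ob')"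
    using ag i unfolding sd_agent_weak_def by blast
  hence "q i i \<ge> pp i i" unfolding top_ag[OF i] by simp
  hence "q i i \<noteq> 0" by (simp add: pp_def)
  hence obi: "ob = i" using det3'[OF d q1 i ob i] by auto
  define t where "t = (ob + 1) mod 3"
  have t: "t < 3" "t \<noteq> i" using obi i unfolding t_def lt3 by auto
  have "(\<Sum>j\<in>{j. j < 3 \<and> (j = t \<or> pio ob j t)}. q j ob)
           \<ge> (\<Sum>j\<in>{j. j < 3 \<and> (j = t \<or> pio ob j t)}. pp j ob)"
    using obj t unfolding sd_object_weak_def by blast
  hence "q t ob \<ge> pp t ob" unfolding top_ob[OF ob, folded t_def] by simp
  moreover have "q t ob = 0" using det3[OF d q1 i ob t] .
  ultimately show False by (simp add: pp_def)
qed

theorem proposition34: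
  shows "\<exists>(n::nat) pref prio (p::nat \<Rightarrow> nat \<Rightarrow> real).
           strict_prefs n pref \<and> strict_prios n prio \<and> bistochastic n p \<and>
           weakly_sd_stable n pref prio p \<and> \<not> claimwise_stable n pref prio p"
  using sp so bs wss ncw by blast
end
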